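(* Under the Setting and Assumptions A1–A4 in the context, $\hat\beta\xrightarrow{P}\tilde\beta^*$ as $L\to\infty$.
   Context: Setting. There are $M$ items indexed by $[M]$ and covariate dimension $d$; $M,d$ fixed. Parameter $\tilde\beta=(\beta_{01},\dots,\beta_{0M},\beta_1^\top,\dots,\beta_M^\top)^\top\in\mathbb R^{M+Md}$. For an ordered pair $a=(i,j)$ and $x\in\mathbb R^d$, $\tilde x_{a}(x)=(e_j^\top, (e_j\otimes x)^\top)^\top-(e_i^\top,(e_i\otimes x)^\top)^\top$, $e_i$ the standard basis of $\mathbb R^M$. $\sigma(z)=(1+e^{-z})^{-1}$. Data: for $l=1,\dots,L$, deterministic $x_l\in\mathbb R^d$; pair $a_l$ drawn independently from $\mathcal E$ with probabilities $p_a>0$, $\sum_a p_a=1$; independently across $l$, $y_l\in\{0,1\}$ with $P(y_l=1\mid a_l)=\sigma(\tilde\beta^{*\top}\tilde x_{a_l}(x_l))$. Write $\tilde x_{a_l}=\tilde x_{a_l}(x_l)$. $\ell(\tilde\beta)=-\sum_{l}\bigl[y_l\log\sigma(\tilde\beta^\top\tilde x_{a_l})+(1-y_l)\log(1-\sigma(\tilde\beta^\top\tilde x_{a_l}))\bigr]$. $\Theta=\{\tilde\beta:\sum_i\beta_{0i}=0,\ \sum_i\beta_i=0\}$. $\hat\beta=\arg\min_{\tilde\beta\in\Theta}\ell(\tilde\beta)$; $\tilde\beta^*\in\Theta$ is the true parameter. $\mathcal I_L(\tilde\beta)=\sum_{l=1}^L\sum_{a\in\mathcal E}p_a\sigma(\tilde\beta^\top\tilde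 x_a(x_l))(1-\sigma(\tilde\beta^\top\tilde x_a(x_l)))\tilde x_a(x_l)\tilde x_a(x_l)^\top$. Assumptions. (A1) The graph on $[M]$ with edge set $\mathcal E$ is connected. (A2) The matrix with rows $((e_j\otimes x_l)-(e_i\otimes x_l))^\top$, $a_l=(i,j)$, has full column rank. (A3) $\|\tilde x_a(x_l)\|_2<B_2<\infty$ for all $l$, $a\in\mathcal E$, and $\sup_l|\tilde\beta^{*\top}\tilde x_{a_l}|<\infty$. (A4) $\frac1L\mathcal I_L(\tilde\beta^* )\to\bar{\mathcal I}$, positive definite on $\Theta$. *)

theory Defs
  imports "HOL-Probability.Probability"
begin

text \<open>Items are indexed by a finite type 'm (so M = CARD('m)), covariates live in
real^'d (d = CARD('d)).  The parameter space R^(M+Md) is real^('m + 'm \<times> 'd):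
component Inl i is beta_0i, component Inr (i,t) is the t-th coordinate of beta_i.\<close>

type_synonym ('m, 'd) param = "real ^ ('m + 'm \<times> 'd)"

definition sigmoid :: "real \<Rightarrow> real" where
  "sigmoid z = 1 / (1 + exp (- z))"

definition ebasis :: "'m::finite \<Rightarrow> real ^ 'm" where
  "ebasis j = (\<chi> i. if i = j then 1 else 0)"

definition kron :: "real ^ 'm::finite \<Rightarrow> real ^ 'd::finite \<Rightarrow> real ^ ('m \<times> 'd)" where
  "kron e x = (\<chi> k. e $ fst k * x $ snd k)"

definition stack :: "real ^ 'm::finite \<Rightarrow> real ^ ('m \<times> 'd::finite) \<Rightarrow> real ^ ('m + 'm \<times> 'd)" where
  "stack u v = (\<chi> k. case k of Inl i \<Rightarrow> u $ i | Inr p \<Rightarrow> v $ p)"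

definition xt :: "'m::finite \<times> 'm \<Rightarrow> real ^ 'd::finite \<Rightarrow> real ^ ('m + 'm \<times> 'd)" where
  "xt a x = stack (ebasis (snd a)) (kron (ebasis (snd a)) x)
          - stack (ebasis (fst a)) (kron (ebasis (fst a)) x)"

definition Theta :: "(('m::finite), ('d::finite)) param set" where
  "Theta = {b. (\<Sum>i\<in>UNIV. b $ Inl i) = 0 \<and> (\<forall>t. (\<Sum>i\<in>UNIV. b $ Inr (i, t)) = 0)}"

definition loss :: "(nat \<Rightarrow> 'w \<Rightarrow> 'm::finite \<times> 'm) \<Rightarrow> (nat \<Rightarrow> 'w \<Rightarrow> bool)
    \<Rightarrow> (nat \<Rightarrow> real ^ 'd::finite) \<Rightarrow> nat \<Rightarrow> 'w \<Rightarrow> ('m, 'd) param \<Rightarrow> real" where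
  "loss A Y x L w b = - (\<Sum>l\<in>{1..L}.
       of_bool (Y l w) * ln (sigmoid (b \<bullet> xt (A l w) (x l)))
     + (1 - of_bool (Y l w)) * ln (1 - sigmoid (b \<bullet> xt (A l w) (x l))))"

definition is_mle :: "(nat \<Rightarrow> 'w \<Rightarrow> 'm::finite \<times> 'm) \<Rightarrow> (nat \<Rightarrow> 'w \<Rightarrow> bool)
    \<Rightarrow> (nat \<Rightarrow> real ^ 'd::finite) \<Rightarrow> nat \<Rightarrow> 'w \<Rightarrow> ('m, 'd) param \<Rightarrow> bool" where
  "is_mle A Y x L w b \<longleftrightarrow> b \<in> Theta \<and> (\<forall>b'\<in>Theta. loss A Y x L w b \<le> loss A Y x L w b')"

definition outer :: "real ^ 'k::finite \<Rightarrow> real ^ 'k \<Rightarrow> real ^ 'k ^ 'k" where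
  "outer u v = (\<chi> r c. u $ r * v $ c)"

definition info :: "('m::finite \<times> 'm \<Rightarrow> real) \<Rightarrow> ('m \<times> 'm) set \<Rightarrow> (nat \<Rightarrow> real ^ 'd::finite)
    \<Rightarrow> nat \<Rightarrow> ('m, 'd) param \<Rightarrow> real ^ ('m + 'm \<times> 'd) ^ ('m + 'm \<times> 'd)" where
  "info p E x L b = (\<Sum>l\<in>{1..L}. \<Sum>a\<in>E.
      (p a * sigmoid (b \<bullet> xt a (x l)) * (1 - sigmoid (b \<bullet> xt a (x l))))
        *\<^sub>R outer (xt a (x l)) (xt a (x l)))"

definition graph_connected :: "('m \<times> 'm) set \<Rightarrow> bool" where
  "graph_connected E \<longleftrightarrow> (\<forall>i j. (i, j) \<in> (E \<union> E\<inverse>)\<^sup>*)"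

text \<open>(A2) the design rows (e_j \<otimes> x_l - e_i \<otimes> x_l), a_l = (i,j), l = 1..L, have full
column rank, read on the constraint subspace sum_i beta_i = 0.\<close>
definition design_full_rank :: "(nat \<Rightarrow> 'm::finite \<times> 'm) \<Rightarrow> (nat \<Rightarrow> real ^ 'd::finite) \<Rightarrow> nat \<Rightarrow> bool" where
  "design_full_rank a x L \<longleftrightarrow>
     (\<forall>v :: real ^ ('m \<times> 'd). (\<forall>t. (\<Sum>i\<in>UNIV. v $ (i, t)) = 0) \<and>
        (\<forall>l\<in>{1..L}. (kron (ebasis (snd (a l))) (x l) - kron (ebasis (fst (a l))) (x l)) \<bullet> v = 0)
        \<longrightarrow> v = 0)"

end

theory Submission
  imports Defs
begin

definition gg :: "real \<Rightarrow> real" where "gg t = ln (1 + exp t)"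
definition sd :: "real \<Rightarrow> real" where "sd t = sigmoid t * (1 - sigmoid t)"

lemma sigmoid_alt: "sigmoid t = exp t / (1 + exp t)"
proof -
  have p: "1 + exp t \<noteq> 0" "1 + exp (-t) \<noteq> 0" by (smt (verit) exp_gt_zero)+
  have "exp (-t) = 1 / exp t" by (simp add: exp_minus field_simps)
  then show ?thesis unfolding sigmoid_def using p by (simp add: field_simps)
qed

lemma sigmoid_pos: "sigmoid t > 0" unfolding sigmoid_def by (simp add: add_pos_pos)
lemma sigmoid_lt1: "sigmoid t < 1" unfolding sigmoid_def by (simp add: add_pos_pos)

lemma one_minus_sigmoid: "1 - sigmoid t = 1 / (1 + exp t)"
proof -
  have p: "1 + exp t \<noteq> 0" by (smt (verit) exp_gt_zero)
  show ?thesis unfolding sigmoid_alt using p by (simp add: field_simps)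
qed

lemma loss_term:
  "- (of_bool yv * ln (sigmoid t) + (1 - of_bool yv) * ln (1 - sigmoid t)) = gg t - of_bool yv * t"
proof -
  have p: "1 + exp t > 0" by (simp add: add_pos_pos)
  have "ln (sigmoid t) = t - gg t" unfolding sigmoid_alt gg_def using p by (simp add: ln_div)
  moreover have "ln (1 - sigmoid t) = - gg t" unfolding one_minus_sigmoid gg_def using p by (simp add: ln_div)
  ultimately show ?thesis by (simp add: algebra_simps)
qed

lemma DERIV_gg: "DERIV gg t :> sigmoid t"
proof -
  have p: "1 + exp t > 0" by (simp add: add_pos_pos)
  have "DERIV (\<lambda>t. ln (1 + exp t)) t :> (exp t / (1 + exp t))"
    by (rule derivative_eq_intros refl | use p in simp)+
  then show ?thesis unfolding gg_def sigmoid_alt by simp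
qed

lemma DERIV_sigmoid: "DERIV sigmoid t :> sd t"
proof -
  have p: "1 + exp t > 0" by (simp add: add_pos_pos)
  have "DERIV (\<lambda>t. exp t / (1 + exp t)) t :> (exp t * (1 + exp t) - exp t * (0 + exp t)) / ((1 + exp t) * (1 + exp t))"
    by (rule DERIV_divide[OF DERIV_exp DERIV_add[OF DERIV_const DERIV_exp]]) (use p in simp)
  then have "DERIV (\<lambda>t. exp t / (1 + exp t)) t :> (exp t * (1 + exp t) - exp t * exp t) / (1 + exp t)^2"
    by (simp add: power2_eq_square)
  moreover have "(exp t * (1 + exp t) - exp t * exp t) / (1 + exp t)^2 = sd t"
    unfolding sd_def one_minus_sigmoid sigmoid_alt using p by (simp add: field_simps power2_eq_square)
  ultimately show ?thesis unfolding sigmoid_alt[abs_def] by simp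
qed

lemma sd_le: "sd t \<le> 1/4"
proof -
  have "sigmoid t * (1 - sigmoid t) \<le> 1/4"
    using mult_const_minus_self_real_le[of "sigmoid t" 1] by simp
  then show ?thesis unfolding sd_def .
qed

lemma sd_nonneg: "sd t \<ge> 0" unfolding sd_def using sigmoid_pos[of t] sigmoid_lt1[of t] by simp

lemma sd_lower: assumes "\<bar>t\<bar> \<le> R" shows "sd t \<ge> 1 / (4 * exp R)"
proof -
  have p: "1 + exp t > 0" by (simp add: add_pos_pos)
  have sdeq: "sd t = 1 / (exp t + 2 + exp (-t))"
    unfolding sd_def one_minus_sigmoid sigmoid_alt using p
    by (simp add: field_simps power2_eq_square exp_minus)
  have "exp t \<le> exp R" "exp (-t) \<le> exp R" "1 \<le> exp R" using assms by auto
  then have "exp t + 2 + exp (-t) \<le> 4 * exp R" by linarith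
  moreover have "exp t + 2 + exp (-t) > 0" by (simp add: add_pos_pos)
  ultimately show ?thesis unfolding sdeq by (simp add: frac_le)
qed

lemma sigmoid_mono: "s \<le> t \<Longrightarrow> sigmoid s \<le> sigmoid t"
  unfolding sigmoid_def by (simp add: add_pos_pos frac_le)

lemma convex_gg: "convex_on UNIV gg"
  by (rule convex_on_realI[where f'=sigmoid]) (auto intro: DERIV_gg sigmoid_mono)

lemma taylor_gg:
  assumes "\<bar>t\<bar> \<le> R" "\<bar>t + u\<bar> \<le> R"
  shows "gg (t + u) - gg t - sigmoid t * u \<ge> u^2 / (8 * exp R)"
proof (cases "u = 0")
  case True then show ?thesis by simp
next
  case False
  define diff where "diff = (\<lambda>n::nat. if n = 0 then gg else if n = 1 then sigmoid else sd)"
  have "\<exists>s. (if t + u < t then t + u < s \<and> s < t else t < s \<and> s < t + u) \<and>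
    gg (t + u) = (\<Sum>m<2. (diff m t / fact m) * (t + u - t)^m) + (diff 2 s / fact 2) * (t + u - t)^2"
  proof (rule Taylor[where a="-R" and b=R])
    show "\<forall>m t. m < 2 \<and> - R \<le> t \<and> t \<le> R \<longrightarrow> DERIV (diff m) t :> diff (Suc m) t"
    proof (intro allI impI)
      fix m :: nat and t :: real assume "m < 2 \<and> - R \<le> t \<and> t \<le> R"
      then have "m = 0 \<or> m = 1" by auto
      then show "DERIV (diff m) t :> diff (Suc m) t"
        by (elim disjE) (simp_all add: diff_def DERIV_gg DERIV_sigmoid)
    qed
  qed (use assms False in \<open>auto simp: diff_def\<close>)
  then obtain s where s: "(if t + u < t then t + u < s \<and> s < t else t < s \<and> s < t + u)"
    and eq: "gg (t + u) = (\<Sum>m<2. (diff m t / fact m) * (t + u - t)^m) + (diff 2 s / fact 2) * (t + u - t)^2"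
    by blast
  have sR: "\<bar>s\<bar> \<le> R" using s assms by (auto split: if_splits)
  have eq2: "gg (t + u) - gg t - sigmoid t * u = sd s / 2 * u^2"
    using eq by (simp add: diff_def numeral_2_eq_2 eval_nat_numeral)
  have "sd s / 2 * u^2 \<ge> 1 / (4 * exp R) / 2 * u^2"
    using sd_lower[OF sR] by (intro mult_right_mono divide_right_mono) auto
  moreover have "1 / (4 * exp R) / 2 * u^2 = u^2 / (8 * exp R)" by simp
  ultimately show ?thesis unfolding eq2 by linarith
qed

definition Qf :: "real ^ 'k::finite ^ 'k \<Rightarrow> real ^ 'k \<Rightarrow> real" where
  "Qf Mx v = (\<Sum>r\<in>UNIV. \<Sum>c\<in>UNIV. v $ r * Mx $ r $ c * v $ c)"

lemma quad_eq: "v \<bullet> (Mx *v v) = Qf Mx v"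
  unfolding Qf_def inner_vec_def matrix_vector_mult_def
  by (simp add: sum_distrib_left mult.assoc)

lemma Qf_scale: "Qf Mx (a *\<^sub>R v) = a^2 * Qf Mx v"
  unfolding Qf_def by (simp add: sum_distrib_left power2_eq_square algebra_simps)

lemma Qf_diff: "\<bar>Qf A v - Qf B v\<bar> \<le> (\<Sum>r\<in>UNIV. \<Sum>c\<in>UNIV. \<bar>A $ r $ c - B $ r $ c\<bar>) * (norm v)^2"
proof -
  have "Qf A v - Qf B v = (\<Sum>r\<in>UNIV. \<Sum>c\<in>UNIV. v $ r * (A $ r $ c - B $ r $ c) * v $ c)"
    unfolding Qf_def by (simp add: sum_subtractf algebra_simps)
  also have "\<bar>\<dots>\<bar> \<le> (\<Sum>r\<in>UNIV. \<Sum>c\<in>UNIV. \<bar>v $ r * (A $ r $ c - B $ r $ c) * v $ c\<bar>)"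
    by (rule order_trans[OF sum_abs]) (intro sum_mono sum_abs)
  also have "\<dots> \<le> (\<Sum>r\<in>UNIV. \<Sum>c\<in>UNIV. \<bar>A $ r $ c - B $ r $ c\<bar> * (norm v)^2)"
  proof (intro sum_mono)
    fix r c
    have "\<bar>v $ r\<bar> * \<bar>v $ c\<bar> \<le> norm v * norm v"
      by (intro mult_mono component_le_norm_cart) auto
    then have "\<bar>A $ r $ c - B $ r $ c\<bar> * (\<bar>v $ r\<bar> * \<bar>v $ c\<bar>) \<le> \<bar>A $ r $ c - B $ r $ c\<bar> * (norm v)^2"
      by (intro mult_left_mono) (auto simp: power2_eq_square)
    moreover have "\<bar>v $ r * (A $ r $ c - B $ r $ c) * v $ c\<bar> = \<bar>A $ r $ c - B $ r $ c\<bar> * (\<bar>v $ r\<bar> * \<bar>v $ c\<bar>)"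
      by (simp only: abs_mult mult.commute mult.left_commute)
    ultimately show "\<bar>v $ r * (A $ r $ c - B $ r $ c) * v $ c\<bar> \<le> \<bar>A $ r $ c - B $ r $ c\<bar> * (norm v)^2"
      by linarith
  qed
  also have "\<dots> = (\<Sum>r\<in>UNIV. \<Sum>c\<in>UNIV. \<bar>A $ r $ c - B $ r $ c\<bar>) * (norm v)^2"
    by (simp add: sum_distrib_right)
  finally show ?thesis .
qed

lemma Theta_lin:
  assumes "u \<in> Theta" "v \<in> Theta"
  shows "a *\<^sub>R u + c *\<^sub>R v \<in> Theta"
  using assms unfolding Theta_def
  by (simp add: sum.distrib sum_distrib_left[symmetric])

lemma Theta_diff:
  assumes "u \<in> Theta" "v \<in> Theta"
  shows "u - v \<in> Theta"
  using Theta_lin[OF assms, of 1 "-1"] by simp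

lemma Theta_zero: "0 \<in> Theta" unfolding Theta_def by simp

lemma Theta_closed: "closed (Theta :: ('m::finite, 'd::finite) param set)"
proof -
  have "Theta = {b :: ('m, 'd) param. (\<Sum>i\<in>UNIV. b $ Inl i) = 0} \<inter> (\<Inter>t. {b. (\<Sum>i\<in>UNIV. b $ Inr (i, t)) = 0})"
    unfolding Theta_def by auto
  also have "closed \<dots>"
    by (intro closed_Int closed_INT closed_Collect_eq continuous_intros ballI)
  finally show ?thesis .
qed

lemma pd_const:
  fixes Ibar :: "real ^ ('m::finite + 'm \<times> 'd::finite) ^ ('m + 'm \<times> 'd)"
  assumes "\<forall>v\<in>Theta. v \<noteq> 0 \<longrightarrow> Qf Ibar v > 0"
  shows "\<exists>mu>0. \<forall>v\<in>Theta. Qf Ibar v \<ge> mu * (norm v)^2"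
proof -
  define S where "S = Theta \<inter> sphere (0 :: ('m,'d) param) 1"
  have key: "Qf Ibar v \<ge> m * (norm v)^2" if m: "\<forall>s\<in>S. Qf Ibar s \<ge> m" and v: "v \<in> Theta" for v m
  proof (cases "v = 0")
    case True then show ?thesis by (simp add: Qf_def)
  next
    case False
    have "(1 / norm v) *\<^sub>R v \<in> S" unfolding S_def using Theta_lin[OF v Theta_zero, of "1 / norm v" 0] False
      by auto
    then have "Qf Ibar ((1 / norm v) *\<^sub>R v) \<ge> m" using m by blast
    then have "(1 / norm v)^2 * Qf Ibar v \<ge> m" by (simp add: Qf_scale)
    then have "(norm v)^2 * ((1 / norm v)^2 * Qf Ibar v) \<ge> (norm v)^2 * m"
      by (intro mult_left_mono) auto
    then show ?thesis using False by (simp add: field_simps power2_eq_square)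
  qed
  show ?thesis
  proof (cases "S = {}")
    case True
    then show ?thesis using key[of 1] by (intro exI[of _ 1]) auto
  next
    case False
    have "compact S" unfolding S_def by (intro closed_Int_compact Theta_closed compact_sphere)
    moreover have "continuous_on S (Qf Ibar)" unfolding Qf_def by (intro continuous_intros)
    ultimately obtain s0 where s0: "s0 \<in> S" "\<forall>s\<in>S. Qf Ibar s0 \<le> Qf Ibar s"
      using continuous_attains_inf[OF _ False] by blast
    have "Qf Ibar s0 > 0" using s0(1) assms unfolding S_def by auto
    then show ?thesis using key[of "Qf Ibar s0"] s0 by blast
  qed
qed

context prob_space
begin

lemma h_meas:
  assumes indep: "indep_vars (\<lambda>_. count_space UNIV) (\<lambda>l w. (A l w, Y l w)) UNIV"
  shows "(\<lambda>w. (A l w, Y l w)) \<in> measurable M (count_space UNIV)"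
  using indep unfolding indep_vars_def by auto

lemma h_sets:
  assumes indep: "indep_vars (\<lambda>_. count_space UNIV) (\<lambda>l w. (A l w, Y l w)) UNIV"
  shows "{w \<in> space M. P (A l w, Y l w)} \<in> sets M"
proof -
  have "{w \<in> space M. P (A l w, Y l w)} = (\<lambda>w. (A l w, Y l w)) -` {z. P z} \<inter> space M" by auto
  also have "\<dots> \<in> sets M" by (rule measurable_sets[OF h_meas[OF indep]]) auto
  finally show ?thesis .
qed

lemma h_fun_meas:
  assumes indep: "indep_vars (\<lambda>_. count_space UNIV) (\<lambda>l w. (A l w, Y l w)) UNIV"
  shows "(\<lambda>w. (f (A l w, Y l w) :: real)) \<in> borel_measurable M"
  using measurable_compose[OF h_meas[OF indep], of f borel] by simp

lemma prob_notE:
  fixes E :: "('m::finite \<times> 'm) set"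
  assumes indep: "indep_vars (\<lambda>_. count_space UNIV) (\<lambda>l w. (A l w, Y l w)) UNIV"
    and p_sum: "(\<Sum>a\<in>E. p a) = 1"
    and law1: "\<forall>a\<in>E. prob {w \<in> space M. A l w = a \<and> Y l w} = p a * s a"
    and law0: "\<forall>a\<in>E. prob {w \<in> space M. A l w = a \<and> \<not> Y l w} = p a * (1 - s a)"
  shows "prob {w \<in> space M. A l w \<notin> E} = 0"
proof -
  define D where "D a = {w \<in> space M. A l w = a}" for a
  have Dsets: "D a \<in> sets M" for a unfolding D_def using h_sets[OF indep, of "\<lambda>z. fst z = a"] by simp
  have "prob (D a) = p a" if a: "a \<in> E" for a
  proof -
    have "D a = {w \<in> space M. A l w = a \<and> Y l w} \<union> {w \<in> space M. A l w = a \<and> \<not> Y l w}"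
      unfolding D_def by auto
    moreover have "prob \<dots> = prob {w \<in> space M. A l w = a \<and> Y l w} + prob {w \<in> space M. A l w = a \<and> \<not> Y l w}"
      by (rule finite_measure_Union) (use h_sets[OF indep, of "\<lambda>z. fst z = a \<and> snd z"]
          h_sets[OF indep, of "\<lambda>z. fst z = a \<and> \<not> snd z"] in auto)
    ultimately show ?thesis using law1 law0 a by (simp add: algebra_simps)
  qed
  have fin: "finite E" by simp
  have "prob (\<Union>a\<in>E. D a) = (\<Sum>a\<in>E. prob (D a))"
  proof (rule measure_finite_Union[OF fin])
    show "D ` E \<subseteq> sets M" using Dsets by blast
    show "disjoint_family_on D E" unfolding disjoint_family_on_def D_def by auto
  qed (simp add: emeasure_eq_measure)
  also have "\<dots> = 1" using \<open>\<And>a. a \<in> E \<Longrightarrow> prob (D a) = p a\<close> p_sum by simp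
  finally have U1: "prob (\<Union>a\<in>E. D a) = 1" .
  have "{w \<in> space M. A l w \<notin> E} = space M - (\<Union>a\<in>E. D a)" unfolding D_def by auto
  also have "prob \<dots> = 1 - prob (\<Union>a\<in>E. D a)"
    by (rule prob_compl) (use Dsets in auto)
  finally show ?thesis using U1 by simp
qed

lemma expect_h:
  fixes E :: "('m::finite \<times> 'm) set"
  assumes indep: "indep_vars (\<lambda>_. count_space UNIV) (\<lambda>l w. (A l w, Y l w)) UNIV"
    and law1: "\<forall>a\<in>E. prob {w \<in> space M. A l w = a \<and> Y l w} = p a * s a"
    and law0: "\<forall>a\<in>E. prob {w \<in> space M. A l w = a \<and> \<not> Y l w} = p a * (1 - s a)"
    and f0: "\<And>a y. a \<notin> E \<Longrightarrow> f (a, y) = 0"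
  shows "expectation (\<lambda>w. f (A l w, Y l w)) =
     (\<Sum>a\<in>E. f (a, True) * (p a * s a) + f (a, False) * (p a * (1 - s a)))"
proof -
  define S1 where "S1 a = {w \<in> space M. A l w = a \<and> Y l w}" for a
  define S0 where "S0 a = {w \<in> space M. A l w = a \<and> \<not> Y l w}" for a
  have S1s: "S1 a \<in> sets M" for a unfolding S1_def using h_sets[OF indep, of "\<lambda>z. fst z = a \<and> snd z"] by simp
  have S0s: "S0 a \<in> sets M" for a unfolding S0_def using h_sets[OF indep, of "\<lambda>z. fst z = a \<and> \<not> snd z"] by simp
  have pw: "f (A l w, Y l w) = (\<Sum>a\<in>E. f (a, True) * indicator (S1 a) w + f (a, False) * indicator (S0 a) w)"
    if w: "w \<in> space M" for w
  proof (cases "A l w \<in> E")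
    case False
    then have "\<forall>a\<in>E. indicator (S1 a) w = (0::real) \<and> indicator (S0 a) w = (0::real)"
      unfolding S1_def S0_def by (auto simp: indicator_def)
    then show ?thesis using f0[OF False] by simp
  next
    case True
    have "(\<Sum>a\<in>E. f (a, True) * indicator (S1 a) w + f (a, False) * indicator (S0 a) w)
        = (\<Sum>a\<in>E. if a = A l w then f (A l w, Y l w) else 0)"
      by (rule sum.cong) (auto simp: S1_def S0_def indicator_def w)
    also have "\<dots> = f (A l w, Y l w)" using True by simp
    finally show ?thesis by simp
  qed
  have "expectation (\<lambda>w. f (A l w, Y l w)) =
      expectation (\<lambda>w. \<Sum>a\<in>E. f (a, True) * indicator (S1 a) w + f (a, False) * indicator (S0 a) w)"
    by (rule Bochner_Integration.integral_cong[OF refl]) (simp add: pw)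
  also have "\<dots> = (\<Sum>a\<in>E. expectation (\<lambda>w. f (a, True) * indicator (S1 a) w + f (a, False) * indicator (S0 a) w))"
    by (rule Bochner_Integration.integral_sum) (auto intro!: integrable_add integrable_mult_right integrable_real_indicator simp: S1s S0s emeasure_eq_measure)
  also have "\<dots> = (\<Sum>a\<in>E. f (a, True) * prob (S1 a) + f (a, False) * prob (S0 a))"
  proof (rule sum.cong[OF refl])
    fix a assume "a \<in> E"
    have i1: "integrable M (\<lambda>w. f (a,True) * indicator (S1 a) w :: real)"
      by (intro integrable_mult_right integrable_real_indicator) (auto simp: S1s emeasure_eq_measure)
    have i0: "integrable M (\<lambda>w. f (a,False) * indicator (S0 a) w :: real)"
      by (intro integrable_mult_right integrable_real_indicator) (auto simp: S0s emeasure_eq_measure)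
    have "S1 a \<inter> space M = S1 a" "S0 a \<inter> space M = S0 a" unfolding S1_def S0_def by auto
    then show "expectation (\<lambda>w. f (a, True) * indicator (S1 a) w + f (a, False) * indicator (S0 a) w)
      = f (a, True) * prob (S1 a) + f (a, False) * prob (S0 a)"
      by (simp add: Bochner_Integration.integral_add[OF i1 i0])
  qed
  also have "\<dots> = (\<Sum>a\<in>E. f (a, True) * (p a * s a) + f (a, False) * (p a * (1 - s a)))"
    using law1 law0 unfolding S1_def S0_def by simp
  finally show ?thesis .
qed

lemma hoeff:
  fixes f :: "nat \<Rightarrow> _ \<Rightarrow> real" and Bd :: real
  assumes indep: "indep_vars (\<lambda>_. count_space UNIV) (\<lambda>l w. (A l w, Y l w)) UNIV"
    and Bd: "Bd > 0" and fb: "\<And>l z. \<bar>f l z\<bar> \<le> Bd" and d: "\<delta> > 0"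
  shows "(\<lambda>L. prob {w \<in> space M. \<bar>(\<Sum>l\<in>{1..L}. f l (A l w, Y l w))
             - (\<Sum>l\<in>{1..L}. expectation (\<lambda>w. f l (A l w, Y l w)))\<bar> \<ge> \<delta> * real L}) \<longlonglongrightarrow> 0"
proof -
  define c where "c = \<delta>^2 / (2 * Bd^2)"
  have c: "c > 0" unfolding c_def using Bd d by simp
  have bound: "prob {w \<in> space M. \<bar>(\<Sum>l\<in>{1..L}. f l (A l w, Y l w))
             - (\<Sum>l\<in>{1..L}. expectation (\<lambda>w. f l (A l w, Y l w)))\<bar> \<ge> \<delta> * real L}
        \<le> 2 * exp (-c) ^ L" if L: "L \<ge> 1" for L
  proof -
    have ind2: "indep_vars (\<lambda>_. borel) (\<lambda>l w. f l (A l w, Y l w)) {1..L}"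
      using indep_vars_compose2[OF indep_vars_subset[OF indep, of "{1..L}"], of "\<lambda>l z. f l z" "\<lambda>_. borel"]
      by simp
    interpret H: Hoeffding_ineq M "{1..L}" "\<lambda>l w. f l (A l w, Y l w)" "\<lambda>_. -Bd" "\<lambda>_. Bd"
        "\<Sum>l\<in>{1..L}. expectation (\<lambda>w. f l (A l w, Y l w))"
    proof unfold_locales
      show "finite {1..L}" by simp
      show "indep_vars (\<lambda>_. borel) (\<lambda>l w. f l (A l w, Y l w)) {1..L}" by (rule ind2)
      fix i assume "i \<in> {1..L}"
      show "AE x in M. f i (A i x, Y i x) \<in> {- Bd..Bd}" 
      proof (intro AE_I2)
        fix x have "\<bar>f i (A i x, Y i x)\<bar> \<le> Bd" by (rule fb)
        then show "f i (A i x, Y i x) \<in> {- Bd..Bd}" by (auto simp: abs_le_iff)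
      qed
    qed
    have sq: "(\<Sum>i\<in>{1..L}. (Bd - - Bd)\<^sup>2) = real L * (4 * Bd^2)"
      by (simp add: power2_eq_square algebra_simps)
    have pos: "(\<Sum>i\<in>{1..L}. (Bd - - Bd)\<^sup>2) > 0" unfolding sq using L Bd by simp
    have "prob {w \<in> space M. \<bar>(\<Sum>l\<in>{1..L}. f l (A l w, Y l w))
             - (\<Sum>l\<in>{1..L}. expectation (\<lambda>w. f l (A l w, Y l w)))\<bar> \<ge> \<delta> * real L}
        \<le> 2 * exp (-2 * (\<delta> * real L)\<^sup>2 / (\<Sum>i\<in>{1..L}. (Bd - - Bd)\<^sup>2))"
      by (rule H.Hoeffding_ineq_abs_ge) (use d pos in auto)
    also have "-2 * (\<delta> * real L)\<^sup>2 / (\<Sum>i\<in>{1..L}. (Bd - - Bd)\<^sup>2) = real L * (-c)"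
      unfolding sq c_def using L Bd by (simp add: power2_eq_square field_simps)
    also have "exp (real L * (-c)) = exp (-c) ^ L" by (rule exp_of_nat_mult)
    finally show ?thesis .
  qed
  have lim: "(\<lambda>L. 2 * exp (-c) ^ L) \<longlonglongrightarrow> 0"
    using LIMSEQ_power_zero[of "exp (-c)"] c tendsto_mult_right_zero[of _ sequentially 2] by simp
  show ?thesis
    apply (rule tendsto_sandwich[OF _ _ tendsto_const lim])
     apply simp
    apply (rule eventually_sequentiallyI[of 1])
    apply (erule bound)
    done
qed

end

context prob_space
begin

lemma gl_meas:
  fixes A :: "nat \<Rightarrow> 'a \<Rightarrow> 'b::countable" and Y :: "nat \<Rightarrow> 'a \<Rightarrow> 'c::countable"
  assumes hm: "\<And>l. (\<lambda>w. (A l w, Y l w)) \<in> measurable M (count_space UNIV)"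
  shows "(\<lambda>w. map (\<lambda>l. (A l w, Y l w)) [1..<n]) \<in> measurable M (count_space UNIV)"
proof (induction n)
  case 0 then show ?case by simp
next
  case (Suc n)
  show ?case
  proof (cases "1 \<le> n")
    case False then show ?thesis by simp
  next
    case True
    have eq: "(\<lambda>w. map (\<lambda>l. (A l w, Y l w)) [1..<Suc n]) = (\<lambda>w. (\<lambda>v. v @ [(A n w, Y n w)]) (map (\<lambda>l. (A l w, Y l w)) [1..<n]) )"
      using True by simp
    have "(\<lambda>w. (\<lambda>v w. v @ [(A n w, Y n w)]) (map (\<lambda>l. (A l w, Y l w)) [1..<n]) w) \<in> measurable M (count_space UNIV)"
    proof (rule measurable_compose_countable'[OF _ Suc.IH])
      fix v :: "('b \<times> 'c) list"
      show "(\<lambda>w. v @ [(A n w, Y n w)]) \<in> measurable M (count_space UNIV)"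
        using measurable_compose[OF hm[of n], of "\<lambda>z. v @ [z]" "count_space UNIV"] by simp
    qed simp
    then show ?thesis unfolding eq by simp
  qed
qed

lemma event_meas:
  fixes A :: "nat \<Rightarrow> 'a \<Rightarrow> 'b::countable" and Y :: "nat \<Rightarrow> 'a \<Rightarrow> 'c::countable"
  assumes hm: "\<And>l. (\<lambda>w. (A l w, Y l w)) \<in> measurable M (count_space UNIV)"
    and Q: "\<And>w w'. w \<in> space M \<Longrightarrow> w' \<in> space M \<Longrightarrow>
       (\<forall>l\<in>{1..L}. A l w = A l w' \<and> Y l w = Y l w') \<Longrightarrow> Q w = Q w'"
  shows "{w \<in> space M. Q w} \<in> sets M"
proof -
  define gl where "gl w = map (\<lambda>l. (A l w, Y l w)) [1..<Suc L]" for w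
  have gm: "gl \<in> measurable M (count_space UNIV)" unfolding gl_def by (rule gl_meas[OF hm])
  have "{w \<in> space M. Q w} = gl -` {v. \<exists>w'\<in>space M. gl w' = v \<and> Q w'} \<inter> space M"
  proof safe
    fix w w' assume w: "w \<in> space M" and w': "w' \<in> space M" "gl w' = gl w" "Q w'"
    have "\<forall>l\<in>{1..L}. A l w = A l w' \<and> Y l w = Y l w'"
      using w'(2) unfolding gl_def map_eq_conv by auto
    then show "Q w" using Q[OF w w'(1)] w'(3) by blast
  qed auto
  also have "\<dots> \<in> sets M" by (rule measurable_sets[OF gm]) simp
  finally show ?thesis .
qed

end

definition fS :: "('m::finite \<times> 'm) set \<Rightarrow> (nat \<Rightarrow> real ^ 'd::finite) \<Rightarrow> ('m, 'd) param
   \<Rightarrow> nat \<Rightarrow> ('m + 'm \<times> 'd) \<Rightarrow> ('m \<times> 'm) \<times> bool \<Rightarrow> real" where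
  "fS E x bstar l k z = (if fst z \<in> E then
     (of_bool (snd z) - sigmoid (bstar \<bullet> xt (fst z) (x l))) * xt (fst z) (x l) $ k else 0)"

definition fW :: "('m::finite \<times> 'm) set \<Rightarrow> (nat \<Rightarrow> real ^ 'd::finite) \<Rightarrow> ('m, 'd) param
   \<Rightarrow> nat \<Rightarrow> ('m + 'm \<times> 'd) \<Rightarrow> ('m + 'm \<times> 'd) \<Rightarrow> ('m \<times> 'm) \<times> bool \<Rightarrow> real" where
  "fW E x bstar l r c z = (if fst z \<in> E then
     sd (bstar \<bullet> xt (fst z) (x l)) * (xt (fst z) (x l) $ r * xt (fst z) (x l) $ c) else 0)"

lemma loss_eq:
  "loss A Y x L w b = (\<Sum>l\<in>{1..L}. gg (b \<bullet> xt (A l w) (x l)) - of_bool (Y l w) * (b \<bullet> xt (A l w) (x l)))"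
  unfolding loss_def sum_negf[symmetric] loss_term ..

lemma inner_expand: "(v :: real ^ 'k::finite) \<bullet> z = (\<Sum>k\<in>UNIV. v $ k * z $ k)"
  unfolding inner_vec_def by simp

lemma sq_expand: "((v :: real ^ 'k::finite) \<bullet> z)^2 = (\<Sum>r\<in>UNIV. \<Sum>c\<in>UNIV. v $ r * (z $ r * z $ c) * v $ c)"
  unfolding inner_expand power2_eq_square sum_product by (simp add: algebra_simps)

lemma core:
  fixes bstar b :: "('m::finite, 'd::finite) param"
  assumes Ein: "\<forall>l\<in>{1..L}. A l w \<in> E"
    and nb: "\<forall>l. \<forall>a\<in>E. norm (xt a (x l)) < B2"
    and zb: "\<forall>l. \<forall>a\<in>E. \<bar>bstar \<bullet> xt a (x l)\<bar> \<le> C"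
    and hS: "\<forall>k. \<bar>\<Sum>l\<in>{1..L}. fS E x bstar l k (A l w, Y l w)\<bar> < \<delta> * real L"
    and hW: "\<forall>r c. \<bar>(\<Sum>l\<in>{1..L}. fW E x bstar l r c (A l w, Y l w)) - info p E x L bstar $ r $ c\<bar> < \<delta> * real L"
    and hI: "\<forall>v\<in>Theta. Qf (info p E x L bstar) v \<ge> real L * mu * (norm v)^2"
    and mu: "mu > 0" and eps: "\<epsilon> > 0" and L: "L > 0"
    and d1: "\<delta> * real (CARD('m + 'm \<times> 'd))^2 \<le> mu / 2"
    and d2: "\<delta> * real (CARD('m + 'm \<times> 'd)) \<le> mu * \<epsilon> / (8 * exp (C + \<epsilon> * B2))"
    and b: "b \<in> Theta" and bs: "bstar \<in> Theta" and dist: "norm (b - bstar) = \<epsilon>"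
  shows "loss A Y x L w bstar < loss A Y x L w b"
proof -
  define N where "N = real (CARD('m + 'm \<times> 'd))"
  define R where "R = C + \<epsilon> * B2"
  define v where "v = b - bstar"
  define X where "X l = xt (A l w) (x l)" for l
  define t where "t l = bstar \<bullet> X l" for l
  define u where "u l = v \<bullet> X l" for l
  define yy where "yy l = (of_bool (Y l w) :: real)" for l
  have vT: "v \<in> Theta" unfolding v_def by (rule Theta_diff[OF b bs])
  have nv: "norm v = \<epsilon>" unfolding v_def by (rule dist)
  have bX: "b \<bullet> X l = t l + u l" for l unfolding t_def u_def v_def by (simp add: inner_diff_left)
  have tb: "\<bar>t l\<bar> \<le> C" if "l \<in> {1..L}" for l using zb Ein that unfolding t_def X_def by blast
  have ub: "\<bar>u l\<bar> \<le> \<epsilon> * B2" if "l \<in> {1..L}" for l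
  proof -
    have "\<bar>u l\<bar> \<le> norm v * norm (X l)" unfolding u_def by (rule Cauchy_Schwarz_ineq2)
    also have "\<dots> \<le> \<epsilon> * B2" unfolding nv using nb Ein that eps unfolding X_def
      by (intro mult_left_mono) (auto simp: less_imp_le)
    finally show ?thesis .
  qed
  have diff: "loss A Y x L w b - loss A Y x L w bstar =
      (\<Sum>l\<in>{1..L}. gg (t l + u l) - gg (t l) - sigmoid (t l) * u l) - (\<Sum>l\<in>{1..L}. (yy l - sigmoid (t l)) * u l)"
    unfolding loss_eq sum_subtractf[symmetric] X_def[symmetric] bX t_def[symmetric] yy_def[symmetric]
    by (intro sum.cong refl) (simp add: algebra_simps)
  have T1: "(\<Sum>l\<in>{1..L}. gg (t l + u l) - gg (t l) - sigmoid (t l) * u l) \<ge> (\<Sum>l\<in>{1..L}. (u l)^2 / (8 * exp R))"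
  proof (intro sum_mono)
    fix l assume l: "l \<in> {1..L}"
    have "\<bar>t l\<bar> \<le> R" using tb[OF l] eps ub[OF l] unfolding R_def by linarith
    moreover have "\<bar>t l + u l\<bar> \<le> R" using tb[OF l] ub[OF l] unfolding R_def by linarith
    ultimately show "(u l)^2 / (8 * exp R) \<le> gg (t l + u l) - gg (t l) - sigmoid (t l) * u l"
      by (rule taylor_gg)
  qed
  define W where "W = (\<chi> r c. \<Sum>l\<in>{1..L}. fW E x bstar l r c (A l w, Y l w))"
  have sdsum: "(\<Sum>l\<in>{1..L}. sd (t l) * (u l)^2) = Qf W v"
  proof -
    have "(\<Sum>l\<in>{1..L}. sd (t l) * (u l)^2) =
        (\<Sum>l\<in>{1..L}. \<Sum>r\<in>UNIV. \<Sum>c\<in>UNIV. v $ r * fW E x bstar l r c (A l w, Y l w) * v $ c)"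
    proof (intro sum.cong refl)
      fix l assume l: "l \<in> {1..L}"
      show "sd (t l) * (u l)^2 = (\<Sum>r\<in>UNIV. \<Sum>c\<in>UNIV. v $ r * fW E x bstar l r c (A l w, Y l w) * v $ c)"
        unfolding u_def sq_expand fW_def using Ein l
        by (simp add: sum_distrib_left t_def X_def algebra_simps)
    qed
    also have "\<dots> = (\<Sum>r\<in>UNIV. \<Sum>l\<in>{1..L}. \<Sum>c\<in>UNIV. v $ r * fW E x bstar l r c (A l w, Y l w) * v $ c)"
      by (rule sum.swap)
    also have "\<dots> = (\<Sum>r\<in>UNIV. \<Sum>c\<in>UNIV. \<Sum>l\<in>{1..L}. v $ r * fW E x bstar l r c (A l w, Y l w) * v $ c)"
      by (intro sum.cong refl sum.swap)
    also have "\<dots> = Qf W v" unfolding Qf_def W_def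
      by (simp add: sum_distrib_left sum_distrib_right)
    finally show ?thesis .
  qed
  have cardsum: "(\<Sum>r\<in>(UNIV :: ('m + 'm \<times> 'd) set). \<Sum>c\<in>(UNIV :: ('m + 'm \<times> 'd) set). \<delta> * real L) = N^2 * (\<delta> * real L)"
    unfolding N_def by (simp add: power2_eq_square)
  have Wq: "Qf W v \<ge> real L * mu * \<epsilon>^2 / 2"
  proof -
    have "\<bar>Qf W v - Qf (info p E x L bstar) v\<bar> \<le>
        (\<Sum>r\<in>UNIV. \<Sum>c\<in>UNIV. \<bar>W $ r $ c - info p E x L bstar $ r $ c\<bar>) * (norm v)^2"
      by (rule Qf_diff)
    also have "\<dots> \<le> (N^2 * (\<delta> * real L)) * (norm v)^2"
      unfolding cardsum[symmetric] W_def using hW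
      by (intro mult_right_mono sum_mono) (auto simp: less_imp_le)
    finally have "\<bar>Qf W v - Qf (info p E x L bstar) v\<bar> \<le> (N^2 * \<delta>) * real L * \<epsilon>^2" 
      unfolding nv by (simp add: algebra_simps)
    moreover have "(N^2 * \<delta>) * real L * \<epsilon>^2 \<le> (mu/2) * real L * \<epsilon>^2"
      using d1 unfolding N_def by (intro mult_right_mono) (auto simp: algebra_simps)
    moreover have "Qf (info p E x L bstar) v \<ge> real L * mu * \<epsilon>^2" using hI vT nv by auto
    ultimately show ?thesis by (simp add: field_simps abs_le_iff) 
  qed
  have T1b: "(\<Sum>l\<in>{1..L}. (u l)^2 / (8 * exp R)) \<ge> (\<Sum>l\<in>{1..L}. 4 * (sd (t l) * (u l)^2)) / (8 * exp R)"
    unfolding sum_divide_distrib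
  proof (intro sum_mono divide_right_mono)
    fix l
    have "4 * sd (t l) \<le> 1" using sd_le[of "t l"] by simp
    then have "(4 * sd (t l)) * (u l)^2 \<le> 1 * (u l)^2" by (intro mult_right_mono) auto
    then show "4 * (sd (t l) * (u l)^2) \<le> (u l)^2" by simp
  qed simp
  have first: "(\<Sum>l\<in>{1..L}. gg (t l + u l) - gg (t l) - sigmoid (t l) * u l) \<ge> real L * mu * \<epsilon>^2 / (4 * exp R)"
  proof -
    have "(\<Sum>l\<in>{1..L}. 4 * (sd (t l) * (u l)^2)) / (8 * exp R) = 4 * Qf W v / (8 * exp R)"
      unfolding sum_distrib_left[symmetric] sdsum ..
    also have "\<dots> \<ge> 4 * (real L * mu * \<epsilon>^2 / 2) / (8 * exp R)"
      using Wq by (intro divide_right_mono) (auto simp: algebra_simps)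
    finally have X: "(\<Sum>l\<in>{1..L}. 4 * (sd (t l) * (u l)^2)) / (8 * exp R) \<ge> 4 * (real L * mu * \<epsilon>^2 / 2) / (8 * exp R)" .
    have "4 * (real L * mu * \<epsilon>^2 / 2) / (8 * exp R) = real L * mu * \<epsilon>^2 / (4 * exp R)" by simp
    then show ?thesis using T1 T1b X by linarith
  qed
  define S where "S k = (\<Sum>l\<in>{1..L}. fS E x bstar l k (A l w, Y l w))" for k
  have second_eq: "(\<Sum>l\<in>{1..L}. (yy l - sigmoid (t l)) * u l) = (\<Sum>k\<in>UNIV. v $ k * S k)"
  proof -
    have "(\<Sum>l\<in>{1..L}. (yy l - sigmoid (t l)) * u l) = (\<Sum>l\<in>{1..L}. \<Sum>k\<in>UNIV. v $ k * fS E x bstar l k (A l w, Y l w))"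
    proof (intro sum.cong refl)
      fix l assume l: "l \<in> {1..L}"
      show "(yy l - sigmoid (t l)) * u l = (\<Sum>k\<in>UNIV. v $ k * fS E x bstar l k (A l w, Y l w))"
        unfolding u_def inner_expand[of v] fS_def using Ein l
        by (simp add: sum_distrib_left t_def X_def yy_def algebra_simps)
    qed
    also have "\<dots> = (\<Sum>k\<in>UNIV. \<Sum>l\<in>{1..L}. v $ k * fS E x bstar l k (A l w, Y l w))"
      by (rule sum.swap)
    also have "\<dots> = (\<Sum>k\<in>UNIV. v $ k * S k)" unfolding S_def
      by (simp add: sum_distrib_left)
    finally show ?thesis .
  qed
  have second: "\<bar>\<Sum>l\<in>{1..L}. (yy l - sigmoid (t l)) * u l\<bar> \<le> N * \<epsilon> * (\<delta> * real L)"
  proof -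
    have "\<bar>\<Sum>k\<in>UNIV. v $ k * S k\<bar> \<le> (\<Sum>k\<in>UNIV. \<bar>v $ k * S k\<bar>)" by (rule sum_abs)
    also have "\<dots> \<le> (\<Sum>k\<in>(UNIV :: ('m + 'm \<times> 'd) set). \<epsilon> * (\<delta> * real L))"
    proof (intro sum_mono)
      fix k
      have "\<bar>v $ k\<bar> \<le> \<epsilon>" using component_le_norm_cart[of v k] nv by simp
      moreover have "\<bar>S k\<bar> \<le> \<delta> * real L" using hS unfolding S_def by (auto simp: less_imp_le)
      ultimately show "\<bar>v $ k * S k\<bar> \<le> \<epsilon> * (\<delta> * real L)"
        unfolding abs_mult by (intro mult_mono) auto
    qed
    also have "\<dots> = N * \<epsilon> * (\<delta> * real L)" unfolding N_def by simp
    finally show ?thesis unfolding second_eq .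
  qed
  have "N * \<epsilon> * (\<delta> * real L) = (\<delta> * N) * (\<epsilon> * real L)" by (simp add: algebra_simps)
  also have "\<dots> \<le> (mu * \<epsilon> / (8 * exp R)) * (\<epsilon> * real L)"
    using d2 eps L unfolding N_def R_def by (intro mult_right_mono) auto
  also have "\<dots> = real L * mu * \<epsilon>^2 / (8 * exp R)" by (simp add: power2_eq_square field_simps)
  finally have sec2: "N * \<epsilon> * (\<delta> * real L) \<le> real L * mu * \<epsilon>^2 / (8 * exp R)" .
  have pos: "real L * mu * \<epsilon>^2 / (8 * exp R) > 0" using L mu eps by simp
  have "real L * mu * \<epsilon>^2 / (4 * exp R) = 2 * (real L * mu * \<epsilon>^2 / (8 * exp R))" by simp
  then have "loss A Y x L w b - loss A Y x L w bstar > 0"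
    unfolding diff using first second sec2 pos by (simp add: abs_le_iff)
  then show ?thesis by simp
qed

lemma loss_convex:
  assumes s: "0 \<le> s" "s \<le> 1"
  shows "loss A Y x L w ((1 - s) *\<^sub>R b1 + s *\<^sub>R b2) \<le> (1 - s) * loss A Y x L w b1 + s * loss A Y x L w b2"
proof -
  have "loss A Y x L w ((1 - s) *\<^sub>R b1 + s *\<^sub>R b2) \<le>
     (\<Sum>l\<in>{1..L}. ((1 - s) * gg (b1 \<bullet> xt (A l w) (x l)) + s * gg (b2 \<bullet> xt (A l w) (x l)))
        - of_bool (Y l w) * (((1 - s) *\<^sub>R b1 + s *\<^sub>R b2) \<bullet> xt (A l w) (x l)))"
    unfolding loss_eq
  proof (intro sum_mono diff_right_mono)
    fix l
    have "gg ((1 - s) *\<^sub>R (b1 \<bullet> xt (A l w) (x l)) + s *\<^sub>R (b2 \<bullet> xt (A l w) (x l)))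
        \<le> (1 - s) * gg (b1 \<bullet> xt (A l w) (x l)) + s * gg (b2 \<bullet> xt (A l w) (x l))"
      by (rule convex_onD[OF convex_gg]) (use s in auto)
    then show "gg (((1 - s) *\<^sub>R b1 + s *\<^sub>R b2) \<bullet> xt (A l w) (x l))
        \<le> (1 - s) * gg (b1 \<bullet> xt (A l w) (x l)) + s * gg (b2 \<bullet> xt (A l w) (x l))"
      by (simp add: inner_add_left)
  qed
  also have "\<dots> = (1 - s) * loss A Y x L w b1 + s * loss A Y x L w b2"
    unfolding loss_eq sum_distrib_left sum.distrib[symmetric]
    by (intro sum.cong refl) (simp add: inner_add_left algebra_simps)
  finally show ?thesis .
qed

lemma cont_gg: "continuous_on UNIV gg"
  using DERIV_gg by (intro continuous_at_imp_continuous_on ballI) (auto intro: DERIV_isCont)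

lemma loss_cont: "continuous_on S (loss A Y x L w)"
proof -
  have "continuous_on S (\<lambda>b. \<Sum>l\<in>{1..L}. gg (b \<bullet> xt (A l w) (x l)) - of_bool (Y l w) * (b \<bullet> xt (A l w) (x l)))"
    by (intro continuous_intros continuous_on_compose2[OF cont_gg]) auto
  then show ?thesis unfolding loss_eq[abs_def] .
qed

lemma outside:
  fixes bstar b :: "('m::finite, 'd::finite) param"
  assumes bs: "bstar \<in> Theta" and eps: "\<epsilon> > 0"
    and sph: "\<forall>b\<in>Theta. norm (b - bstar) = \<epsilon> \<longrightarrow> loss A Y x L w bstar < loss A Y x L w b"
    and b: "b \<in> Theta" and far: "norm (b - bstar) > \<epsilon>"
  shows "loss A Y x L w bstar < loss A Y x L w b"
proof -
  define d where "d = norm (b - bstar)"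
  define s where "s = \<epsilon> / d"
  have d: "d > 0" "d > \<epsilon>" unfolding d_def using far eps by auto
  have s: "0 < s" "s < 1" unfolding s_def using d eps by auto
  define q where "q = (1 - s) *\<^sub>R bstar + s *\<^sub>R b"
  have qT: "q \<in> Theta" unfolding q_def by (rule Theta_lin[OF bs b])
  have "q - bstar = s *\<^sub>R (b - bstar)" unfolding q_def by (simp add: algebra_simps)
  then have "norm (q - bstar) = s * d" using s unfolding d_def by simp
  also have "\<dots> = \<epsilon>" unfolding s_def using d by simp
  finally have "loss A Y x L w bstar < loss A Y x L w q" using sph qT by blast
  also have "\<dots> \<le> (1 - s) * loss A Y x L w bstar + s * loss A Y x L w b"
    unfolding q_def by (rule loss_convex) (use s in auto)
  finally have "s * loss A Y x L w bstar < s * loss A Y x L w b" by (simp add: algebra_simps)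
  then show ?thesis using s by simp
qed

lemma mle_local:
  fixes bstar :: "('m::finite, 'd::finite) param"
  assumes bs: "bstar \<in> Theta" and eps: "\<epsilon> > 0"
    and sph: "\<forall>b\<in>Theta. norm (b - bstar) = \<epsilon> \<longrightarrow> loss A Y x L w bstar < loss A Y x L w b"
  shows "(\<exists>b. is_mle A Y x L w b) \<and> (\<forall>b. is_mle A Y x L w b \<longrightarrow> dist b bstar \<le> \<epsilon>)"
proof
  define K where "K = Theta \<inter> cball bstar \<epsilon>"
  have cK: "compact K" unfolding K_def by (intro closed_Int_compact Theta_closed compact_cball)
  have nK: "K \<noteq> {}" unfolding K_def using bs eps by auto
  obtain b0 where b0: "b0 \<in> K" "\<forall>b\<in>K. loss A Y x L w b0 \<le> loss A Y x L w b"
    using continuous_attains_inf[OF cK nK loss_cont[of K A Y x L w]] by auto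
  have "bstar \<in> K" unfolding K_def using bs eps by auto
  then have le: "loss A Y x L w b0 \<le> loss A Y x L w bstar" using b0 by blast
  have "is_mle A Y x L w b0"
    unfolding is_mle_def
  proof (intro conjI ballI)
    show "b0 \<in> Theta" using b0 unfolding K_def by blast
    fix b' :: "('m, 'd) param" assume b': "b' \<in> Theta"
    show "loss A Y x L w b0 \<le> loss A Y x L w b'"
    proof (cases "norm (b' - bstar) \<le> \<epsilon>")
      case True
      then have "b' \<in> K" unfolding K_def using b' by (simp add: dist_norm norm_minus_commute)
      then show ?thesis using b0 by blast
    next
      case False
      then show ?thesis using outside[OF bs eps sph b'] le by simp
    qed
  qed
  then show "\<exists>b. is_mle A Y x L w b" by blast
next
  show "\<forall>b. is_mle A Y x L w b \<longrightarrow> dist b bstar \<le> \<epsilon>"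
  proof (intro allI impI)
    fix b :: "('m, 'd) param" assume m: "is_mle A Y x L w b"
    show "dist b bstar \<le> \<epsilon>"
    proof (rule ccontr)
      assume "\<not> dist b bstar \<le> \<epsilon>"
      then have "norm (b - bstar) > \<epsilon>" by (simp add: dist_norm)
      moreover have "b \<in> Theta" "loss A Y x L w b \<le> loss A Y x L w bstar" using m bs unfolding is_mle_def by auto
      ultimately show False using outside[OF bs eps sph] by force
    qed
  qed
qed

lemma Qf_scaleM: "Qf (c *\<^sub>R Mx) v = c * Qf Mx v"
  unfolding Qf_def by (simp add: sum_distrib_left algebra_simps)

lemma loss_local:
  assumes "\<forall>l\<in>{1..L}. A l w = A l w' \<and> Y l w = Y l w'"
  shows "loss A Y x L w = loss A Y x L w'"
  unfolding loss_def fun_eq_iff using assms by (auto intro!: sum.cong arg_cong[where f=uminus])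

lemma is_mle_local:
  assumes "\<forall>l\<in>{1..L}. A l w = A l w' \<and> Y l w = Y l w'"
  shows "is_mle A Y x L w = is_mle A Y x L w'"
  unfolding is_mle_def fun_eq_iff loss_local[OF assms] by simp

lemma fS_bound:
  assumes nb: "\<forall>l. \<forall>a\<in>E. norm (xt a (x l)) < B2"
  shows "\<bar>fS E x bstar l k z\<bar> \<le> \<bar>B2\<bar> + B2^2 + 1"
proof (cases "fst z \<in> E")
  case True
  have s: "\<bar>of_bool (snd z) - sigmoid (bstar \<bullet> xt (fst z) (x l))\<bar> \<le> 1"
    using sigmoid_pos[of "bstar \<bullet> xt (fst z) (x l)"] sigmoid_lt1[of "bstar \<bullet> xt (fst z) (x l)"] by auto
  have c: "\<bar>xt (fst z) (x l) $ k\<bar> \<le> \<bar>B2\<bar>"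
  proof -
    have "norm (xt (fst z) (x l)) < B2" using nb True by blast
    then show ?thesis using component_le_norm_cart[of "xt (fst z) (x l)" k] by linarith
  qed
  have "\<bar>fS E x bstar l k z\<bar> = \<bar>of_bool (snd z) - sigmoid (bstar \<bullet> xt (fst z) (x l))\<bar> * \<bar>xt (fst z) (x l) $ k\<bar>"
    unfolding fS_def using True by (simp add: abs_mult)
  also have "\<dots> \<le> 1 * \<bar>B2\<bar>" by (intro mult_mono s c) auto
  finally show ?thesis using zero_le_power2[of B2] by linarith
qed (simp add: fS_def add_nonneg_pos)

lemma fW_bound:
  assumes nb: "\<forall>l. \<forall>a\<in>E. norm (xt a (x l)) < B2"
  shows "\<bar>fW E x bstar l r c z\<bar> \<le> \<bar>B2\<bar> + B2^2 + 1"
proof (cases "fst z \<in> E")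
  case True
  have c1: "\<bar>xt (fst z) (x l) $ r\<bar> \<le> \<bar>B2\<bar>"
  proof -
    have "norm (xt (fst z) (x l)) < B2" using nb True by blast
    then show ?thesis using component_le_norm_cart[of "xt (fst z) (x l)" r] by linarith
  qed
  have c2: "\<bar>xt (fst z) (x l) $ c\<bar> \<le> \<bar>B2\<bar>"
  proof -
    have "norm (xt (fst z) (x l)) < B2" using nb True by blast
    then show ?thesis using component_le_norm_cart[of "xt (fst z) (x l)" c] by linarith
  qed
  have s: "\<bar>sd (bstar \<bullet> xt (fst z) (x l))\<bar> \<le> 1" using sd_le[of "bstar \<bullet> xt (fst z) (x l)"] sd_nonneg[of "bstar \<bullet> xt (fst z) (x l)"] by linarith
  have "\<bar>fW E x bstar l r c z\<bar> = \<bar>sd (bstar \<bullet> xt (fst z) (x l))\<bar> * (\<bar>xt (fst z) (x l) $ r\<bar> * \<bar>xt (fst z) (x l) $ c\<bar>)"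
    unfolding fW_def using True by (simp add: abs_mult)
  also have "\<dots> \<le> 1 * (\<bar>B2\<bar> * \<bar>B2\<bar>)" by (intro mult_mono s c1 c2) auto
  finally show ?thesis using abs_ge_self[of B2] by (simp add: power2_eq_square)
qed (simp add: fW_def add_nonneg_pos)

lemma (in prob_space) dev_sets:
  fixes f :: "nat \<Rightarrow> _ \<Rightarrow> real"
  assumes indep: "indep_vars (\<lambda>_. count_space UNIV) (\<lambda>l w. (A l w, Y l w)) UNIV"
  shows "{w \<in> space M. d \<le> \<bar>(\<Sum>l\<in>I. f l (A l w, Y l w)) - cc\<bar>} \<in> sets M"
proof -
  have [measurable]: "\<And>l. (\<lambda>w. f l (A l w, Y l w)) \<in> borel_measurable M"
    by (rule h_fun_meas[OF indep])
  show ?thesis by measurable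
qed

theorem mainTheorem7:
  fixes M :: "'w measure"
    and A :: "nat \<Rightarrow> 'w \<Rightarrow> 'm::finite \<times> 'm"
    and Y :: "nat \<Rightarrow> 'w \<Rightarrow> bool"
    and x :: "nat \<Rightarrow> real ^ 'd::finite"
    and E :: "('m \<times> 'm) set"
    and p :: "'m \<times> 'm \<Rightarrow> real"
    and bstar :: "('m, 'd) param"
    and Ibar :: "real ^ ('m + 'm \<times> 'd) ^ ('m + 'm \<times> 'd)"
    and B2 :: real
  assumes P: "prob_space M"
    and p_pos: "\<forall>a\<in>E. p a > 0"
    and p_sum: "(\<Sum>a\<in>E. p a) = 1"
    and indep: "prob_space.indep_vars M (\<lambda>_. count_space UNIV) (\<lambda>l w. (A l w, Y l w)) UNIV"
    and law1: "\<forall>l. \<forall>a\<in>E. measure M {w \<in> space M. A l w = a \<and> Y l w}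
                 = p a * sigmoid (bstar \<bullet> xt a (x l))"
    and law0: "\<forall>l. \<forall>a\<in>E. measure M {w \<in> space M. A l w = a \<and> \<not> Y l w}
                 = p a * (1 - sigmoid (bstar \<bullet> xt a (x l)))"
    and bstar_Theta: "bstar \<in> Theta"
    and A1: "graph_connected E"
    and A2: "\<forall>w\<in>space M. \<exists>L0. \<forall>L\<ge>L0. design_full_rank (\<lambda>l. A l w) x L"
    and A3a: "\<forall>l. \<forall>a\<in>E. norm (xt a (x l)) < B2"
    and A3b: "\<exists>C. \<forall>l. \<forall>a\<in>E. \<bar>bstar \<bullet> xt a (x l)\<bar> \<le> C"
    and A4a: "(\<lambda>L. (1 / real L) *\<^sub>R info p E x L bstar) \<longlonglongrightarrow> Ibar"
    and A4b: "\<forall>v\<in>Theta. v \<noteq> 0 \<longrightarrow> v \<bullet> (Ibar *v v) > 0"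
  shows "\<forall>\<epsilon>>0. (\<lambda>L. measure M {w \<in> space M.
            (\<exists>b. is_mle A Y x L w b) \<and>
            (\<forall>b. is_mle A Y x L w b \<longrightarrow> dist b bstar \<le> \<epsilon>)}) \<longlonglongrightarrow> 1"
proof (intro allI impI)
  fix \<epsilon> :: real assume eps: "\<epsilon> > 0"
  interpret prob_space M by (rule P)
  have hm: "\<And>l. (\<lambda>w. (A l w, Y l w)) \<in> measurable M (count_space UNIV)" by (rule h_meas[OF indep])
  obtain C where Cb: "\<forall>l. \<forall>a\<in>E. \<bar>bstar \<bullet> xt a (x l)\<bar> \<le> C" using A3b by blast
  have pd: "\<forall>v\<in>Theta. v \<noteq> 0 \<longrightarrow> Qf Ibar v > 0" using A4b by (simp add: quad_eq)
  obtain mu0 where mu0: "mu0 > 0" "\<forall>v\<in>Theta. Qf Ibar v \<ge> mu0 * (norm v)^2"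
    using pd_const[OF pd] by blast
  define mu where "mu = mu0 / 2"
  have mu: "mu > 0" unfolding mu_def using mu0 by simp
  define N where "N = real CARD('m + 'm \<times> 'd)"
  have N: "N > 0" unfolding N_def by (simp only: of_nat_0_less_iff zero_less_card_finite)
  define R where "R = C + \<epsilon> * B2"
  define \<delta> where "\<delta> = min (mu / (2 * N^2)) (mu * \<epsilon> / (8 * exp R) / N)"
  have dpos: "\<delta> > 0" unfolding \<delta>_def using mu N eps by simp
  have d1: "\<delta> * N^2 \<le> mu / 2"
  proof -
    have "\<delta> \<le> mu / (2 * N^2)" unfolding \<delta>_def by simp
    then have "\<delta> * N^2 \<le> mu / (2 * N^2) * N^2" using N by (intro mult_right_mono) auto
    then show ?thesis using N by simp
  qed
  have d2: "\<delta> * N \<le> mu * \<epsilon> / (8 * exp R)"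
  proof -
    have "\<delta> \<le> mu * \<epsilon> / (8 * exp R) / N" unfolding \<delta>_def by simp
    then have "\<delta> * N \<le> mu * \<epsilon> / (8 * exp R) / N * N" using N by (intro mult_right_mono) auto
    then show ?thesis using N by simp
  qed
  define Bd where "Bd = \<bar>B2\<bar> + B2^2 + 1"
  have Bd: "Bd > 0" unfolding Bd_def by (simp add: add_nonneg_pos)
  define tau where "tau L = (\<Sum>r\<in>UNIV. \<Sum>c\<in>UNIV. \<bar>((1 / real L) *\<^sub>R info p E x L bstar) $ r $ c - Ibar $ r $ c\<bar>)" for L
  have "(\<lambda>L. tau L) \<longlonglongrightarrow> (\<Sum>r\<in>UNIV. \<Sum>c\<in>UNIV. \<bar>Ibar $ r $ c - Ibar $ r $ c\<bar>)"
    unfolding tau_def by (intro tendsto_intros A4a)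
  then have "(\<lambda>L. tau L) \<longlonglongrightarrow> 0" by simp
  then have "eventually (\<lambda>L. tau L < mu) sequentially" using mu by (rule order_tendstoD)
  then obtain L1 where L1: "\<And>L. L \<ge> L1 \<Longrightarrow> tau L < mu" by (auto simp: eventually_sequentially)
  have hI: "\<forall>v\<in>Theta. Qf (info p E x L bstar) v \<ge> real L * mu * (norm v)^2" if L: "L \<ge> L1" "L > 0" for L
  proof
    fix v :: "('m, 'd) param" assume v: "v \<in> Theta"
    have "\<bar>Qf ((1 / real L) *\<^sub>R info p E x L bstar) v - Qf Ibar v\<bar> \<le> tau L * (norm v)^2"
      unfolding tau_def by (rule Qf_diff)
    also have "\<dots> \<le> mu * (norm v)^2" using L1[OF L(1)] by (intro mult_right_mono) auto
    finally have "Qf ((1 / real L) *\<^sub>R info p E x L bstar) v \<ge> Qf Ibar v - mu * (norm v)^2" by linarith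
    moreover have "Qf Ibar v \<ge> mu0 * (norm v)^2" using mu0 v by blast
    ultimately have "(1 / real L) * Qf (info p E x L bstar) v \<ge> mu * (norm v)^2"
      unfolding Qf_scaleM mu_def by (simp add: field_simps)
    then have "real L * ((1 / real L) * Qf (info p E x L bstar) v) \<ge> real L * (mu * (norm v)^2)"
      by (intro mult_left_mono) auto
    then show "Qf (info p E x L bstar) v \<ge> real L * mu * (norm v)^2" using L by (simp add: field_simps)
  qed
  have expS: "(\<Sum>l\<in>{1..L}. expectation (\<lambda>w. fS E x bstar l k (A l w, Y l w))) = 0" for L k
  proof (intro sum.neutral ballI)
    fix l
    have "expectation (\<lambda>w. fS E x bstar l k (A l w, Y l w)) =
      (\<Sum>a\<in>E. fS E x bstar l k (a, True) * (p a * sigmoid (bstar \<bullet> xt a (x l)))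
         + fS E x bstar l k (a, False) * (p a * (1 - sigmoid (bstar \<bullet> xt a (x l)))))"
      by (rule expect_h[where s="\<lambda>a. sigmoid (bstar \<bullet> xt a (x l))", OF indep])
         (use law1 law0 in \<open>auto simp: fS_def\<close>)
    also have "\<dots> = 0" by (intro sum.neutral ballI) (simp add: fS_def algebra_simps)
    finally show "expectation (\<lambda>w. fS E x bstar l k (A l w, Y l w)) = 0" .
  qed
  have expW: "(\<Sum>l\<in>{1..L}. expectation (\<lambda>w. fW E x bstar l r c (A l w, Y l w))) = info p E x L bstar $ r $ c" for L r c
  proof -
    have "(\<Sum>l\<in>{1..L}. expectation (\<lambda>w. fW E x bstar l r c (A l w, Y l w)))
       = (\<Sum>l\<in>{1..L}. \<Sum>a\<in>E. (p a * sigmoid (bstar \<bullet> xt a (x l)) * (1 - sigmoid (bstar \<bullet> xt a (x l))))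
            * (xt a (x l) $ r * xt a (x l) $ c))"
    proof (intro sum.cong refl)
      fix l
      have "expectation (\<lambda>w. fW E x bstar l r c (A l w, Y l w)) =
        (\<Sum>a\<in>E. fW E x bstar l r c (a, True) * (p a * sigmoid (bstar \<bullet> xt a (x l)))
           + fW E x bstar l r c (a, False) * (p a * (1 - sigmoid (bstar \<bullet> xt a (x l)))))"
        by (rule expect_h[where s="\<lambda>a. sigmoid (bstar \<bullet> xt a (x l))", OF indep])
           (use law1 law0 in \<open>auto simp: fW_def\<close>)
      also have "\<dots> = (\<Sum>a\<in>E. (p a * sigmoid (bstar \<bullet> xt a (x l)) * (1 - sigmoid (bstar \<bullet> xt a (x l))))
            * (xt a (x l) $ r * xt a (x l) $ c))"
        by (intro sum.cong refl) (simp add: fW_def sd_def algebra_simps)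
      finally show "expectation (\<lambda>w. fW E x bstar l r c (A l w, Y l w)) = \<dots>" .
    qed
    also have "\<dots> = info p E x L bstar $ r $ c"
      unfolding info_def by (simp add: outer_def)
    finally show ?thesis .
  qed
  define U0 where "U0 L = (\<Union>l\<in>{1..L}. {w \<in> space M. A l w \<notin> E})" for L
  define US where "US L k = {w \<in> space M. \<delta> * real L \<le> \<bar>(\<Sum>l\<in>{1..L}. fS E x bstar l k (A l w, Y l w))
      - (\<Sum>l\<in>{1..L}. expectation (\<lambda>w. fS E x bstar l k (A l w, Y l w)))\<bar>}" for L k
  define UW where "UW L rc = {w \<in> space M. \<delta> * real L \<le> \<bar>(\<Sum>l\<in>{1..L}. fW E x bstar l (fst rc) (snd rc) (A l w, Y l w))
      - (\<Sum>l\<in>{1..L}. expectation (\<lambda>w. fW E x bstar l (fst rc) (snd rc) (A l w, Y l w)))\<bar>}" for L rc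
  define Ub where "Ub L = U0 L \<union> (\<Union>k\<in>UNIV. US L k) \<union> (\<Union>rc\<in>UNIV. UW L rc)" for L
  define T where "T L = {w \<in> space M. (\<exists>b. is_mle A Y x L w b) \<and> (\<forall>b. is_mle A Y x L w b \<longrightarrow> dist b bstar \<le> \<epsilon>)}" for L
  have Tm: "T L \<in> sets M" for L
    unfolding T_def
  proof (rule event_meas[OF hm, where L=L])
    fix w w' assume "w \<in> space M" "w' \<in> space M" and eq: "\<forall>l\<in>{1..L}. A l w = A l w' \<and> Y l w = Y l w'"
    have "is_mle A Y x L w = is_mle A Y x L w'" by (rule is_mle_local[OF eq])
    then show "((\<exists>b. is_mle A Y x L w b) \<and> (\<forall>b. is_mle A Y x L w b \<longrightarrow> dist b bstar \<le> \<epsilon>)) =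
      ((\<exists>b. is_mle A Y x L w' b) \<and> (\<forall>b. is_mle A Y x L w' b \<longrightarrow> dist b bstar \<le> \<epsilon>))" by simp
  qed
  have U0m: "{w \<in> space M. A l w \<notin> E} \<in> sets M" for l
    using h_sets[OF indep, of "\<lambda>z. fst z \<notin> E"] by simp
  have USm: "US L k \<in> sets M" for L k unfolding US_def by (rule dev_sets[OF indep])
  have UWm: "UW L rc \<in> sets M" for L rc unfolding UW_def by (rule dev_sets[OF indep])
  have Ubm: "Ub L \<in> sets M" for L unfolding Ub_def U0_def using U0m USm UWm by auto
  have U0p: "prob (U0 L) = 0" for L
  proof -
    have "prob (U0 L) \<le> (\<Sum>l\<in>{1..L}. prob {w \<in> space M. A l w \<notin> E})"
      unfolding U0_def by (rule finite_measure_subadditive_finite) (use U0m in auto)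
    also have "\<dots> = 0"
    proof (intro sum.neutral ballI)
      fix l show "prob {w \<in> space M. A l w \<notin> E} = 0"
        by (rule prob_notE[where s="\<lambda>a. sigmoid (bstar \<bullet> xt a (x l))", OF indep p_sum]) (use law1 law0 in auto)
    qed
    finally show ?thesis using measure_nonneg[of M "U0 L"] by linarith
  qed
  define bnd where "bnd L = (\<Sum>k\<in>UNIV. prob (US L k)) + (\<Sum>rc\<in>UNIV. prob (UW L rc))" for L
  have Ubp: "prob (Ub L) \<le> bnd L" for L
  proof -
    have "prob (Ub L) \<le> prob (U0 L \<union> (\<Union>k\<in>UNIV. US L k)) + prob (\<Union>rc\<in>UNIV. UW L rc)"
      unfolding Ub_def by (rule measure_Un_le) (use U0m USm UWm in \<open>auto simp: U0_def\<close>)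
    also have "prob (U0 L \<union> (\<Union>k\<in>UNIV. US L k)) \<le> prob (U0 L) + prob (\<Union>k\<in>UNIV. US L k)"
      by (rule measure_Un_le) (use U0m USm in \<open>auto simp: U0_def\<close>)
    also have "prob (\<Union>k\<in>UNIV. US L k) \<le> (\<Sum>k\<in>UNIV. prob (US L k))"
      by (rule finite_measure_subadditive_finite) (use USm in auto)
    also have "prob (\<Union>rc\<in>UNIV. UW L rc) \<le> (\<Sum>rc\<in>UNIV. prob (UW L rc))"
      by (rule finite_measure_subadditive_finite) (use UWm in auto)
    finally show ?thesis unfolding bnd_def U0p by simp
  qed
  have lim0: "bnd \<longlonglongrightarrow> 0"
  proof -
    have fSb: "\<And>l z. \<bar>fS E x bstar l k z\<bar> \<le> Bd" for k unfolding Bd_def by (rule fS_bound[OF A3a])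
    have fWb: "\<And>l z. \<bar>fW E x bstar l r c z\<bar> \<le> Bd" for r c unfolding Bd_def by (rule fW_bound[OF A3a])
    have "(\<lambda>L. (\<Sum>k\<in>UNIV. prob (US L k)) + (\<Sum>rc\<in>UNIV. prob (UW L rc))) \<longlonglongrightarrow> 0 + 0"
    proof (intro tendsto_add tendsto_null_sum)
      fix k show "(\<lambda>L. prob (US L k)) \<longlonglongrightarrow> 0"
        unfolding US_def by (rule hoeff[OF indep Bd fSb dpos])
    next
      fix rc :: "('m + 'm \<times> 'd) \<times> ('m + 'm \<times> 'd)"
      show "(\<lambda>L. prob (UW L rc)) \<longlonglongrightarrow> 0"
        unfolding UW_def by (rule hoeff[OF indep Bd fWb dpos])
    qed
    then show ?thesis unfolding bnd_def[abs_def] by simp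
  qed
  have incl: "space M - Ub L \<subseteq> T L" if L: "L \<ge> L1" "L > 0" for L
  proof
    fix w assume w: "w \<in> space M - Ub L"
    have Ein: "\<forall>l\<in>{1..L}. A l w \<in> E" using w unfolding Ub_def U0_def by auto
    have hS: "\<forall>k. \<bar>\<Sum>l\<in>{1..L}. fS E x bstar l k (A l w, Y l w)\<bar> < \<delta> * real L"
      using w unfolding Ub_def US_def expS by (auto simp: not_le)
    have hW: "\<forall>r c. \<bar>(\<Sum>l\<in>{1..L}. fW E x bstar l r c (A l w, Y l w)) - info p E x L bstar $ r $ c\<bar> < \<delta> * real L"
    proof (intro allI)
      fix r c
      have "w \<notin> UW L (r, c)" using w unfolding Ub_def by blast
      then show "\<bar>(\<Sum>l\<in>{1..L}. fW E x bstar l r c (A l w, Y l w)) - info p E x L bstar $ r $ c\<bar> < \<delta> * real L"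
        using w unfolding UW_def expW by (auto simp: not_le)
    qed
    have sph: "\<forall>b\<in>Theta. norm (b - bstar) = \<epsilon> \<longrightarrow> loss A Y x L w bstar < loss A Y x L w b"
    proof (intro ballI impI)
      fix b :: "('m, 'd) param" assume b: "b \<in> Theta" and dist: "norm (b - bstar) = \<epsilon>"
      show "loss A Y x L w bstar < loss A Y x L w b"
        by (rule core[where A=A and Y=Y and w=w and L=L and E=E and x=x and bstar=bstar and p=p, OF Ein A3a Cb hS hW hI[OF L] mu eps L(2) d1[unfolded N_def] d2[unfolded N_def R_def] b bstar_Theta dist])
    qed
    show "w \<in> T L" unfolding T_def using mle_local[OF bstar_Theta eps sph] w by auto
  qed
  have "(\<lambda>L. prob (T L)) \<longlonglongrightarrow> 1"
  proof (rule tendsto_sandwich[of "\<lambda>L. 1 - bnd L" _ _ "\<lambda>L. 1"])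
    show "eventually (\<lambda>L. 1 - bnd L \<le> prob (T L)) sequentially"
    proof (rule eventually_sequentiallyI[of "max L1 1"])
      fix L assume "max L1 1 \<le> L"
      then have L: "L \<ge> L1" "L > 0" by auto
      have "1 - bnd L \<le> 1 - prob (Ub L)" using Ubp[of L] by simp
      also have "\<dots> = prob (space M - Ub L)" by (rule prob_compl[OF Ubm, symmetric])
      also have "\<dots> \<le> prob (T L)" by (rule finite_measure_mono[OF incl[OF L] Tm])
      finally show "1 - bnd L \<le> prob (T L)" .
    qed
    show "eventually (\<lambda>L. prob (T L) \<le> 1) sequentially" by simp
    show "(\<lambda>L. 1 - bnd L) \<longlonglongrightarrow> 1" using tendsto_diff[OF tendsto_const lim0, of 1] by simp
  qed simp
  then show "(\<lambda>L. measure M {w \<in> space M. (\<exists>b. is_mle A Y x L w b) \<and>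
            (\<forall>b. is_mle A Y x L w b \<longrightarrow> dist b bstar \<le> \<epsilon>)}) \<longlonglongrightarrow> 1"
    unfolding T_def .
qed

end
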